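(* Let $0<\varepsilon\leq 1/2$ be a constant and $0<\alpha\le 1$. For a subset $S\subseteq\mathbb{Z}_p$ chosen uniformly at random among the subsets of $\mathbb{Z}_p$ of size $p^{\varepsilon}$, its generic $\alpha$-complexity satisfies $$\mathcal{C}_\alpha(S)>\frac{\alpha|S|}{\ln p}$$ with probability at least $1-1/p$, for all sufficiently large primes $p$.
   Context: $\mathbb{Z}_p$ is the field of residues modulo a prime $p$. For $L\subseteq\mathbb{Z}_p^2$, $I(L)=\{x\in\mathbb{Z}_p\mid \exists (a,b),(a',b')\in L,\ (a,b)\neq(a',b'),\ ax+b=a'x+b'\}$. For $S\subseteq\mathbb{Z}_p$ and $0<\alpha\leq1$, the generic $\alpha$-complexity $\mathcal{C}_\alpha(S)$ is the smallest cardinality of a set $L\subseteq\mathbb{Z}_p^2$ with $|S\cap I(L)|\geq\alpha|S|$. *)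

theory Defs
  imports Complex_Main "HOL-Computational_Algebra.Primes"
begin

text \<open>Residues modulo p are represented by the naturals 0..p-1; arithmetic is taken mod p.
  A line is a pair (a,b) in Z_p^2 representing x |-> a*x+b.\<close>

definition Zp :: "nat \<Rightarrow> nat set" where
  "Zp p = {0..<p}"

definition intersections :: "nat \<Rightarrow> (nat \<times> nat) set \<Rightarrow> nat set" where
  "intersections p L = {x \<in> Zp p. \<exists>a b a' b'. (a, b) \<in> L \<and> (a', b') \<in> L \<and> (a, b) \<noteq> (a', b')
       \<and> (a * x + b) mod p = (a' * x + b') mod p}"

definition generic_complexity :: "nat \<Rightarrow> real \<Rightarrow> nat set \<Rightarrow> nat" where
  "generic_complexity p \<alpha> S = (LEAST n. \<exists>L. L \<subseteq> Zp p \<times> Zp p \<and> card L = n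
       \<and> real (card (S \<inter> intersections p L)) \<ge> \<alpha> * real (card S))"

end

theory Submission
  imports Defs "HOL-Library.FuncSet" "HOL-Real_Asymp.Real_Asymp"
begin

lemma small_dvd_zero:
  fixes z :: int assumes "int p dvd z" "\<bar>z\<bar> < int p" shows "z = 0"
proof (rule ccontr)
  assume "z \<noteq> 0"
  then have "\<bar>int p\<bar> \<le> \<bar>z\<bar>" using dvd_imp_le_int assms(1) by blast
  then show False using assms(2) by simp
qed

lemma mod_eq_int_dvd:
  fixes u v p :: nat
  assumes "u mod p = v mod p"
  shows "int p dvd int u - int v"
proof -
  have "int (u mod p) = int (v mod p)" using assms by simp
  then have "int u mod int p = int v mod int p" by (simp only: zmod_int)
  then show ?thesis by (simp only: mod_eq_dvd_iff)
qed

lemma uniq_int: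
  fixes p a b a' b' x y :: nat
  assumes "prime p" "a < p" "b < p" "a' < p" "b' < p" "x < p" "y < p" "(a,b) \<noteq> (a',b')"
    "(a*x+b) mod p = (a'*x+b') mod p" "(a*y+b) mod p = (a'*y+b') mod p"
  shows "x = y"
proof -
  have ex: "int (a*x+b) - int (a'*x+b') = (int a - int a') * int x + (int b - int b')"
    by (simp add: algebra_simps)
  have ey: "int (a*y+b) - int (a'*y+b') = (int a - int a') * int y + (int b - int b')"
    by (simp add: algebra_simps)
  have px: "int p dvd (int a - int a') * int x + (int b - int b')"
    using mod_eq_int_dvd[OF assms(9)] unfolding ex .
  have py: "int p dvd (int a - int a') * int y + (int b - int b')"
    using mod_eq_int_dvd[OF assms(10)] unfolding ey .
  show ?thesis
  proof (cases "a = a'")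
    case True
    then have d: "int p dvd int b - int b'" using px by simp
    have "\<bar>int b - int b'\<bar> < int p" using assms(3,5) by linarith
    then have "int b - int b' = 0" using small_dvd_zero[OF d] by blast
    then have "b = b'" by simp
    then show ?thesis using True assms(8) by simp
  next
    case False
    have e: "((int a - int a') * int x + (int b - int b')) - ((int a - int a') * int y + (int b - int b'))
        = (int a - int a') * (int x - int y)" by (simp add: algebra_simps)
    have d: "int p dvd (int a - int a') * (int x - int y)"
      using dvd_diff[OF px py] unfolding e .
    have pp: "prime (int p)" using assms(1) by simp
    have nd: "\<not> int p dvd (int a - int a')"
    proof
      assume d2: "int p dvd (int a - int a')"
      have "\<bar>int a - int a'\<bar> < int p" using assms(2,4) by linarith
      then have "int a - int a' = 0" using small_dvd_zero[OF d2] by blast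
      then show False using False by simp
    qed
    have d3: "int p dvd (int x - int y)" using d nd prime_dvd_mult_iff[OF pp] by blast
    have "\<bar>int x - int y\<bar> < int p" using assms(6,7) by linarith
    then have "int x - int y = 0" using small_dvd_zero[OF d3] by blast
    then show ?thesis by simp
  qed
qed


lemma card_inter:
  assumes "prime p" "L \<subseteq> Zp p \<times> Zp p"
  shows "card (intersections p L) \<le> card L ^ 2"
proof -
  define X where "X = (\<lambda>(l::nat\<times>nat, l'::nat\<times>nat). {x \<in> Zp p. l \<noteq> l' \<and>
      (fst l * x + snd l) mod p = (fst l' * x + snd l') mod p})"
  have fZ2: "finite (Zp p \<times> Zp p)" unfolding Zp_def by simp
  have fin: "finite L" by (rule finite_subset[OF assms(2) fZ2])
  have sub: "intersections p L \<subseteq> (\<Union>q\<in>L \<times> L. X q)"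
  proof
    fix x assume "x \<in> intersections p L"
    then obtain a b a' b' where h: "x \<in> Zp p" "(a, b) \<in> L" "(a', b') \<in> L" "(a, b) \<noteq> (a', b')"
      "(a * x + b) mod p = (a' * x + b') mod p" unfolding intersections_def by blast
    then have "x \<in> X ((a, b), (a', b'))" unfolding X_def by simp
    moreover have "((a, b), (a', b')) \<in> L \<times> L" using h by simp
    ultimately show "x \<in> (\<Union>q\<in>L \<times> L. X q)" by blast
  qed
  have XZ: "X q \<subseteq> Zp p" for q unfolding X_def by (cases q) auto
  have c1: "card (X q) \<le> 1" if "q \<in> L \<times> L" for q
  proof -
    obtain a b a' b' where q: "q = ((a,b),(a',b'))" by (metis prod.exhaust)
    have lt: "a < p" "b < p" "a' < p" "b' < p" using that assms(2) q unfolding Zp_def by auto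
    have Xq: "X q = {x \<in> Zp p. (a, b) \<noteq> (a', b') \<and> (a * x + b) mod p = (a' * x + b') mod p}"
      unfolding X_def q by simp
    have "X q \<subseteq> Zp p" unfolding Xq by blast
    then have fX: "finite (X q)" by (rule finite_subset) (simp add: Zp_def)
    have "\<forall>x\<in>X q. \<forall>y\<in>X q. x = y"
    proof (intro ballI)
      fix x y assume "x \<in> X q" "y \<in> X q"
      then have "x < p" "y < p" "(a, b) \<noteq> (a', b')" "(a * x + b) mod p = (a' * x + b') mod p"
        "(a * y + b) mod p = (a' * y + b') mod p" unfolding Xq Zp_def by auto
      then show "x = y" using uniq_int[OF assms(1) lt] by blast
    qed
    then have "card (X q) \<le> Suc 0" using card_le_Suc0_iff_eq[OF fX] by blast
    then show ?thesis by simp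
  qed
  have "card (intersections p L) \<le> card (\<Union>q\<in>L \<times> L. X q)"
  proof (rule card_mono[OF _ sub])
    have "(\<Union>q\<in>L \<times> L. X q) \<subseteq> Zp p" using XZ by blast
    then show "finite (\<Union>q\<in>L \<times> L. X q)" by (rule finite_subset) (simp add: Zp_def)
  qed
  also have "\<dots> \<le> (\<Sum>q\<in>L \<times> L. card (X q))" using fin by (intro card_UN_le) simp
  also have "\<dots> \<le> (\<Sum>q\<in>L \<times> L. 1)" using c1 by (intro sum_mono) auto
  also have "\<dots> = card L ^ 2" by (simp add: card_cartesian_product power2_eq_square)
  finally show ?thesis .
qed

lemma binom_ratio:
  fixes a p m :: nat
  assumes "a \<le> p"
  shows "real (a choose m) * real p ^ m \<le> real (p choose m) * real a ^ m"
proof (cases "m \<le> a")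
  case False
  then show ?thesis by (simp add: binomial_eq_0)
next
  case True
  have mp: "m \<le> p" using True assms by simp
  have pc: "\<And>x::real. (\<Prod>i = 0..<m. x) = x ^ m" by simp
  have "real (a choose m) * real p ^ m = (\<Prod>i = 0..<m. real (a - i) / real (m - i)) * (\<Prod>i = 0..<m. real p)"
    by (simp only: binomial_altdef_of_nat[OF True] pc)
  also have "\<dots> = (\<Prod>i = 0..<m. real (a - i) / real (m - i) * real p)"
    by (rule prod.distrib[symmetric])
  also have "\<dots> \<le> (\<Prod>i = 0..<m. real (p - i) / real (m - i) * real a)"
  proof (rule prod_mono, safe)
    fix i assume "i \<in> {0..<m}"
    then have i: "i < m" by simp
    have h0: "real a * real i \<le> real p * real i" using assms by (intro mult_right_mono) auto
    have e1: "real (a - i) = real a - real i" using i True by (intro of_nat_diff) simp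
    have e2: "real (p - i) = real p - real i" using i mp by (intro of_nat_diff) simp
    have "(real a - real i) * real p \<le> (real p - real i) * real a"
      using h0 by (simp add: algebra_simps)
    then have "real (a - i) * real p \<le> real (p - i) * real a" by (simp only: e1 e2)
    then have "real (a - i) * real p / real (m - i) \<le> real (p - i) * real a / real (m - i)"
      by (rule divide_right_mono) simp
    then show "real (a - i) / real (m - i) * real p \<le> real (p - i) / real (m - i) * real a"
      by (simp only: times_divide_eq_left)
  qed simp
  also have "\<dots> = (\<Prod>i = 0..<m. real (p - i) / real (m - i)) * (\<Prod>i = 0..<m. real a)"
    by (rule prod.distrib)
  also have "\<dots> = real (p choose m) * real a ^ m"
    by (simp only: binomial_altdef_of_nat[OF mp] pc)
  finally show ?thesis .
qed

lemma supersets_card: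
  assumes "finite A" "T \<subseteq> A" "card T \<le> k"
  shows "card {S. T \<subseteq> S \<and> S \<subseteq> A \<and> card S = k} \<le> (card A - card T) choose (k - card T)"
proof -
  have fT: "finite T" by (rule finite_subset[OF assms(2) assms(1)])
  have "card {S. T \<subseteq> S \<and> S \<subseteq> A \<and> card S = k} \<le> card {R. R \<subseteq> A - T \<and> card R = k - card T}"
  proof (rule card_inj_on_le[where f = "\<lambda>S. S - T"])
    show "inj_on (\<lambda>S. S - T) {S. T \<subseteq> S \<and> S \<subseteq> A \<and> card S = k}"
      by (rule inj_onI) blast
    show "(\<lambda>S. S - T) ` {S. T \<subseteq> S \<and> S \<subseteq> A \<and> card S = k} \<subseteq> {R. R \<subseteq> A - T \<and> card R = k - card T}"
    proof safe
      fix S x assume "T \<subseteq> S" "S \<subseteq> A" "k = card S"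
      then show "card (S - T) = card S - card T" using card_Diff_subset[OF fT] by blast
    qed auto
    show "finite {R. R \<subseteq> A - T \<and> card R = k - card T}" using assms(1) by simp
  qed
  also have "\<dots> = card (A - T) choose (k - card T)" using assms(1) by (simp add: n_subsets)
  also have "\<dots> = (card A - card T) choose (k - card T)" using card_Diff_subset[OF fT assms(2)] by simp
  finally show ?thesis .
qed

lemma surj_PiE:
  assumes "finite L" "L \<noteq> {}" "card L \<le> n" "L \<subseteq> A"
  shows "\<exists>g \<in> PiE {..<n} (\<lambda>_. A). g ` {..<n} = L"
proof -
  obtain h where h: "bij_betw h {0..<card L} L" using ex_bij_betw_nat_finite[OF assms(1)] by blast
  have c0: "0 < card L" using assms(1,2) by (simp add: card_gt_0_iff)
  define g where "g = (\<lambda>i. if i < n then (if i < card L then h i else h 0) else undefined)"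
  have hL: "h i \<in> L" if "i < card L" for i using h that bij_betwE by fastforce
  have "g \<in> PiE {..<n} (\<lambda>_. A)"
    unfolding g_def using hL c0 assms(4) by (auto simp: PiE_def extensional_def)
  moreover have "g ` {..<n} = L"
  proof
    show "g ` {..<n} \<subseteq> L" unfolding g_def using hL c0 by auto
    show "L \<subseteq> g ` {..<n}"
    proof
      fix l assume "l \<in> L"
      then obtain i where "i < card L" "h i = l" using h by (metis atLeastLessThan_iff bij_betw_iff_bijections)
      then show "l \<in> g ` {..<n}" unfolding g_def using assms(3)
        by (intro image_eqI[where x = i]) auto
    qed
  qed
  ultimately show ?thesis by blast
qed

lemma gc_exists:
  assumes "prime p" "S \<subseteq> Zp p" "\<alpha> \<le> 1"
  shows "\<exists>n L. L \<subseteq> Zp p \<times> Zp p \<and> card L = n \<and> real (card (S \<inter> intersections p L)) \<ge> \<alpha> * real (card S)"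
proof -
  have p2: "p \<ge> 2" using assms(1) prime_ge_2_nat by blast
  have "intersections p (Zp p \<times> Zp p) = Zp p"
  proof
    show "Zp p \<subseteq> intersections p (Zp p \<times> Zp p)"
    proof
      fix x assume x: "x \<in> Zp p"
      then show "x \<in> intersections p (Zp p \<times> Zp p)"
        unfolding intersections_def using p2
        by (intro CollectI conjI exI[of _ 0] exI[of _ x] exI[of _ 1] exI[of _ 0]) (auto simp: Zp_def)
    qed
  qed (auto simp: intersections_def)
  then have "S \<inter> intersections p (Zp p \<times> Zp p) = S" using assms(2) by auto
  moreover have "\<alpha> * real (card S) \<le> real (card S)" using mult_right_mono[OF assms(3), of "real (card S)"] by simp
  ultimately show ?thesis by (intro exI[of _ "card (Zp p \<times> Zp p)"] exI[of _ "Zp p \<times> Zp p"]) auto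
qed


lemma key_ineq:
  fixes P \<alpha> :: real and k n0 m :: nat
  assumes P3: "P \<ge> 3" and L1: "ln P > 1" and a0: "0 < \<alpha>" and a1: "\<alpha> \<le> 1"
    and n0: "real n0 \<le> \<alpha> * real k / ln P" and m: "real m \<ge> \<alpha> * real k"
    and kP: "real k ^ 2 \<le> P" and cL: "2 * \<alpha> * ln (ln P) \<ge> 2 * \<alpha> + ln 2 + 1"
    and kL: "real k \<ge> ln P"
  shows "P * P ^ (2 * n0) * (real n0 ^ 2 / P) ^ m * 2 ^ k \<le> 1"
proof (cases "n0 = 0")
  case True
  have "m \<noteq> 0" using m a0 kL L1 by (smt (verit) mult_pos_pos of_nat_0)
  then show ?thesis using True by (simp add: zero_power)
next
  case False
  define L where "L = ln P"
  define q where "q = real n0 ^ 2 / P"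
  have P0: "P > 0" using P3 by simp
  have q0: "q > 0" unfolding q_def using False P0 by simp
  have ak: "\<alpha> * real k \<le> real k" using mult_right_mono[OF a1, of "real k"] by simp
  have "\<alpha> * real k / L \<le> real k / L" using ak L1 unfolding L_def by (intro divide_right_mono) auto
  then have n0K: "real n0 \<le> real k / L" using n0 unfolding L_def by linarith
  have "real n0 ^ 2 \<le> (real k / L) ^ 2" using n0K by (intro power_mono) auto
  also have "\<dots> = real k ^ 2 / L ^ 2" by (simp add: power_divide)
  also have "\<dots> \<le> P / L ^ 2" using kP L1 unfolding L_def by (simp add: divide_right_mono)
  finally have "real n0 ^ 2 / P \<le> P / L ^ 2 / P" using P0 by (intro divide_right_mono) auto
  also have "P / L ^ 2 / P = 1 / L ^ 2" using P0 by simp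
  finally have "q \<le> 1 / L ^ 2" unfolding q_def .
  moreover have "1 / L ^ 2 > 0" using L1 unfolding L_def by simp
  ultimately have "ln q \<le> ln (1 / L ^ 2)" using q0 ln_le_cancel_iff[of q "1 / L ^ 2"] by simp
  also have "\<dots> = - 2 * ln L" using L1 unfolding L_def by (simp add: ln_div ln_realpow)
  finally have lq: "ln q \<le> - 2 * ln L" .
  have lL: "ln L > 0" using L1 unfolding L_def by simp
  have "real m * ln q \<le> real m * (- 2 * ln L)" using lq by (intro mult_left_mono) auto
  also have "\<dots> \<le> \<alpha> * real k * (- 2 * ln L)" using m lL by (intro mult_right_mono_neg) auto
  finally have mq: "real m * ln q \<le> - 2 * \<alpha> * real k * ln L" by simp
  have nL: "real n0 * L \<le> \<alpha> * real k" using n0 L1 unfolding L_def by (simp add: pos_le_divide_eq)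
  have pos: "P * P ^ (2 * n0) * q ^ m * 2 ^ k > 0" using P0 q0 by simp
  have "ln (P * P ^ (2 * n0) * q ^ m * 2 ^ k) = L + real (2 * n0) * L + real m * ln q + real k * ln 2"
  proof -
    have e1: "ln (P * P ^ (2 * n0) * q ^ m * 2 ^ k) = ln (P * P ^ (2 * n0) * q ^ m) + ln (2 ^ k)"
      using P0 q0 by (intro ln_mult_pos) auto
    have e2: "ln (P * P ^ (2 * n0) * q ^ m) = ln (P * P ^ (2 * n0)) + ln (q ^ m)"
      using P0 q0 by (intro ln_mult_pos) auto
    have e3: "ln (P * P ^ (2 * n0)) = ln P + ln (P ^ (2 * n0))"
      using P0 by (intro ln_mult_pos) auto
    have e4: "ln (P ^ (2 * n0)) = real (2 * n0) * ln P" by (rule ln_realpow)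
    have e5: "ln (q ^ m) = real m * ln q" by (rule ln_realpow)
    have e6: "ln ((2::real) ^ k) = real k * ln 2" by (rule ln_realpow)
    show ?thesis unfolding L_def using e1 e2 e3 e4 e5 e6 by linarith
  qed
  also have "\<dots> \<le> L + 2 * \<alpha> * real k - 2 * \<alpha> * real k * ln L + real k * ln 2"
    using nL mq by simp
  also have "\<dots> = L - real k * (2 * \<alpha> * ln L - 2 * \<alpha> - ln 2)" by (simp add: algebra_simps)
  also have "\<dots> \<le> L - real k * 1"
  proof -
    have "1 \<le> 2 * \<alpha> * ln L - 2 * \<alpha> - ln 2" using cL unfolding L_def by linarith
    then have "real k * 1 \<le> real k * (2 * \<alpha> * ln L - 2 * \<alpha> - ln 2)"
      by (rule mult_left_mono) simp
    then show ?thesis by linarith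
  qed
  also have "\<dots> \<le> 0" using kL unfolding L_def by simp
  finally have "ln (P * P ^ (2 * n0) * q ^ m * 2 ^ k) \<le> 0" .
  then have "P * P ^ (2 * n0) * q ^ m * 2 ^ k \<le> 1" using pos ln_le_zero_iff by blast
  then show ?thesis unfolding q_def .
qed


theorem theorem3:
  fixes \<epsilon> \<alpha> :: real
  assumes "0 < \<epsilon>" "\<epsilon> \<le> 1/2" "0 < \<alpha>" "\<alpha> \<le> 1"
  shows "\<exists>P0. \<forall>p::nat. prime p \<and> p \<ge> P0 \<longrightarrow>
    (let k = nat \<lfloor>real p powr \<epsilon>\<rfloor> in
      real (card {S. S \<subseteq> Zp p \<and> card S = k \<and>
                   real (generic_complexity p \<alpha> S) > \<alpha> * real (card S) / ln (real p)})
      \<ge> (1 - 1 / real p) * real (p choose k))"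
proof -
  define c where "c = (2 * \<alpha> + ln 2 + 1) / (2 * \<alpha>)"
  have e1: "eventually (\<lambda>p::nat. c \<le> ln (ln (real p))) at_top" by real_asymp
  have e2: "eventually (\<lambda>p::nat. ln (real p) \<le> real p powr \<epsilon> - 1) at_top"
    using assms(1) by real_asymp
  have e3: "eventually (\<lambda>p::nat. 1 < ln (real p)) at_top" by real_asymp
  have e4: "eventually (\<lambda>p::nat. 3 \<le> p) at_top" by (rule eventually_ge_at_top)
  have "eventually (\<lambda>p::nat. c \<le> ln (ln (real p)) \<and> ln (real p) \<le> real p powr \<epsilon> - 1
      \<and> 1 < ln (real p) \<and> 3 \<le> p) at_top"
    using e1 e2 e3 e4 by (intro eventually_conj) auto
  then obtain N where N: "\<And>p. p \<ge> N \<Longrightarrow> c \<le> ln (ln (real p)) \<and> ln (real p) \<le> real p powr \<epsilon> - 1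
      \<and> 1 < ln (real p) \<and> 3 \<le> p"
    unfolding eventually_at_top_linorder by blast
  show ?thesis
  proof (intro exI[of _ N] allI impI)
    fix p :: nat assume hp: "prime p \<and> N \<le> p"
    then have pr: "prime p" by simp
    have hc: "c \<le> ln (ln (real p))" and hL: "ln (real p) \<le> real p powr \<epsilon> - 1"
      and L1: "1 < ln (real p)" and p3: "3 \<le> p" using N hp by auto
    have P3: "3 \<le> real p" using p3 by simp
    have cL: "2 * \<alpha> * ln (ln (real p)) \<ge> 2 * \<alpha> + ln 2 + 1"
      using hc assms(3) unfolding c_def by (simp add: pos_divide_le_eq mult.commute)
    define k where "k = nat \<lfloor>real p powr \<epsilon>\<rfloor>"
    have pe0: "0 \<le> real p powr \<epsilon>" by simp
    have kfl: "real k = of_int \<lfloor>real p powr \<epsilon>\<rfloor>" unfolding k_def using pe0 by (simp add: of_nat_nat)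
    have kge: "real k \<ge> real p powr \<epsilon> - 1" using kfl floor_correct[of "real p powr \<epsilon>"] by linarith
    have kle: "real k \<le> real p powr \<epsilon>" using kfl floor_correct[of "real p powr \<epsilon>"] by linarith
    have kL: "ln (real p) \<le> real k" using kge hL by linarith
    have k1: "k \<ge> 1" using kL L1 by linarith
    have "real p powr \<epsilon> \<le> real p powr (1/2)" using assms(2) P3 by (intro powr_mono) auto
    then have kh: "real k \<le> real p powr (1/2)" using kle by linarith
    have "real k ^ 2 \<le> (real p powr (1/2)) ^ 2" using kh by (intro power_mono) auto
    also have "(real p powr (1/2)) ^ 2 = real p"
      using P3 by (simp add: power2_eq_square powr_add[symmetric])
    finally have kP: "real k ^ 2 \<le> real p" .
    then have "k ^ 2 \<le> p" by (metis of_nat_le_iff of_nat_power)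
    moreover have "k \<le> k ^ 2" using k1 by (simp add: power2_eq_square)
    ultimately have kp: "k \<le> p" by linarith
    define n0 where "n0 = nat \<lfloor>\<alpha> * real k / ln (real p)\<rfloor>"
    define m where "m = nat \<lceil>\<alpha> * real k\<rceil>"
    have akL0: "0 \<le> \<alpha> * real k / ln (real p)" using assms(3) L1 by simp
    have n0le: "real n0 \<le> \<alpha> * real k / ln (real p)" unfolding n0_def using akL0 by linarith
    have mge: "real m \<ge> \<alpha> * real k" unfolding m_def by (rule real_nat_ceiling_ge)
    have ak: "\<alpha> * real k \<le> real k" using mult_right_mono[OF assms(4), of "real k"] by simp
    have mk: "m \<le> k" unfolding m_def using ak nat_ceiling_le_eq by blast
    have key: "real p * real p ^ (2 * n0) * (real n0 ^ 2 / real p) ^ m * 2 ^ k \<le> 1"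
      by (rule key_ineq[OF P3 L1 assms(3) assms(4) n0le mge kP cL kL])
    have finZ: "finite (Zp p)" and cardZ: "card (Zp p) = p" by (auto simp: Zp_def)
    define A where "A = {S. S \<subseteq> Zp p \<and> card S = k}"
    define Good where "Good = {S. S \<subseteq> Zp p \<and> card S = k \<and>
                   real (generic_complexity p \<alpha> S) > \<alpha> * real (card S) / ln (real p)}"
    define Bad where "Bad = A - Good"
    have cardA: "card A = p choose k" unfolding A_def using n_subsets[OF finZ] cardZ by simp
    have finA: "finite A" unfolding A_def using finZ by simp
    have GA: "Good \<subseteq> A" unfolding Good_def A_def by auto
    have cardGB: "card A = card Good + card Bad"
      unfolding Bad_def using card_Diff_subset[OF finite_subset[OF GA finA] GA] card_mono[OF finA GA] by simp
    define G where "G = PiE {..<n0} (\<lambda>_. Zp p \<times> Zp p)"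
    define J where "J = (\<lambda>g. intersections p (g ` {..<n0}))"
    define TT where "TT = (\<lambda>g. {T. T \<subseteq> J g \<and> card T = m})"
    define SS where "SS = (\<lambda>T. {S. T \<subseteq> S \<and> S \<subseteq> Zp p \<and> card S = k})"
    have finG: "finite G" unfolding G_def using finZ by (intro finite_PiE) auto
    have cardG: "card G = (p * p) ^ n0"
      unfolding G_def using finZ cardZ by (simp add: card_PiE card_cartesian_product)
    have JZ: "J g \<subseteq> Zp p" for g unfolding J_def intersections_def by auto
    have finJ: "finite (J g)" for g by (rule finite_subset[OF JZ finZ])
    have finTT: "finite (TT g)" for g unfolding TT_def using finJ[of g] by simp
    have cardTT: "card (TT g) = card (J g) choose m" for g unfolding TT_def using n_subsets[OF finJ] by simp
    have cardSS: "card (SS T) \<le> (p - m) choose (k - m)" if "T \<in> TT g" for T g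
    proof -
      have "T \<subseteq> Zp p" "card T = m" using that JZ unfolding TT_def by auto
      then show ?thesis unfolding SS_def using supersets_card[OF finZ, of T k] mk cardZ by simp
    qed
    have Jn0: "card (J g) \<le> n0 ^ 2" if "g \<in> G" for g
    proof -
      have sub: "g ` {..<n0} \<subseteq> Zp p \<times> Zp p" using PiE_mem[OF that[unfolded G_def]] by blast
      have "card (J g) \<le> card (g ` {..<n0}) ^ 2" unfolding J_def by (rule card_inter[OF pr sub])
      also have "\<dots> \<le> n0 ^ 2" using card_image_le[of "{..<n0}" g] by (intro power_mono) auto
      finally show ?thesis .
    qed
    have Jp: "card (J g) \<le> p" for g using card_mono[OF finZ JZ] cardZ by simp
    have BadU: "Bad \<subseteq> (\<Union>g\<in>G. \<Union>T\<in>TT g. SS T)"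
    proof
      fix S assume "S \<in> Bad"
      then have SZ: "S \<subseteq> Zp p" and cS: "card S = k"
        and nb: "\<not> real (generic_complexity p \<alpha> S) > \<alpha> * real (card S) / ln (real p)"
        unfolding Bad_def A_def Good_def by auto
      define Q where "Q = (\<lambda>n. \<exists>L. L \<subseteq> Zp p \<times> Zp p \<and> card L = n
         \<and> real (card (S \<inter> intersections p L)) \<ge> \<alpha> * real (card S))"
      have "\<exists>n. Q n" unfolding Q_def using gc_exists[OF pr SZ assms(4)] by blast
      then have "Q (Least Q)" by (rule LeastI_ex)
      moreover have "generic_complexity p \<alpha> S = Least Q" unfolding generic_complexity_def Q_def ..
      ultimately obtain L where LZ: "L \<subseteq> Zp p \<times> Zp p" and cL: "card L = generic_complexity p \<alpha> S"
        and cov: "real (card (S \<inter> intersections p L)) \<ge> \<alpha> * real k"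
        unfolding Q_def using cS by auto
      have "real (card L) \<le> \<alpha> * real k / ln (real p)" using nb cL cS by simp
      then have Ln0: "card L \<le> n0" unfolding n0_def by (simp add: le_nat_iff le_floor_iff)
      have finL: "finite L" by (rule finite_subset[OF LZ]) (simp add: Zp_def)
      have Lne: "L \<noteq> {}"
      proof
        assume "L = {}"
        then have "intersections p L = {}" unfolding intersections_def by auto
        moreover have "\<alpha> * real k > 0" using assms(3) k1 by simp
        ultimately show False using cov by simp
      qed
      obtain g where gG: "g \<in> G" and gL: "g ` {..<n0} = L"
        using surj_PiE[OF finL Lne Ln0 LZ] unfolding G_def by blast
      have "m \<le> card (S \<inter> intersections p L)" unfolding m_def using cov nat_ceiling_le_eq by blast
      then obtain T where T: "T \<subseteq> S \<inter> intersections p L" "card T = m"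
        by (rule obtain_subset_with_card_n)
      have "T \<in> TT g" unfolding TT_def J_def gL using T by auto
      moreover have "S \<in> SS T" unfolding SS_def using T SZ cS by auto
      ultimately show "S \<in> (\<Union>g\<in>G. \<Union>T\<in>TT g. SS T)" using gG by blast
    qed
    have finSS: "finite (SS T)" for T unfolding SS_def using finZ by simp
    have "card Bad \<le> card (\<Union>g\<in>G. \<Union>T\<in>TT g. SS T)"
      by (rule card_mono[OF _ BadU]) (use finG finTT finSS in auto)
    also have "\<dots> \<le> (\<Sum>g\<in>G. card (\<Union>T\<in>TT g. SS T))" using finG by (rule card_UN_le)
    also have "\<dots> \<le> (\<Sum>g\<in>G. \<Sum>T\<in>TT g. card (SS T))"
      by (intro sum_mono card_UN_le finTT)
    also have "\<dots> \<le> (\<Sum>g\<in>G. \<Sum>T\<in>TT g. (p - m) choose (k - m))"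
      by (intro sum_mono cardSS) auto
    also have "\<dots> = (\<Sum>g\<in>G. (card (J g) choose m) * ((p - m) choose (k - m)))"
      by (simp add: cardTT)
    finally have b0: "card Bad \<le> (\<Sum>g\<in>G. (card (J g) choose m) * ((p - m) choose (k - m)))" .
    have b1: "real (card Bad) \<le> (\<Sum>g\<in>G. real (card (J g) choose m) * real ((p - m) choose (k - m)))"
    proof -
      have "real (card Bad) \<le> real (\<Sum>g\<in>G. (card (J g) choose m) * ((p - m) choose (k - m)))"
        using b0 by (simp only: of_nat_le_iff)
      also have "\<dots> = (\<Sum>g\<in>G. real (card (J g) choose m) * real ((p - m) choose (k - m)))" by simp
      finally show ?thesis .
    qed
    have Pp: "real p > 0" using P3 by simp
    have bJ: "real (card (J g) choose m) \<le> real (p choose m) * (real n0 ^ 2 / real p) ^ m" if "g \<in> G" for g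
    proof -
      have "real (card (J g) choose m) * real p ^ m \<le> real (p choose m) * real (card (J g)) ^ m"
        by (rule binom_ratio[OF Jp])
      also have "\<dots> \<le> real (p choose m) * (real n0 ^ 2) ^ m"
        using Jn0[OF that] by (intro mult_left_mono power_mono) (auto simp flip: of_nat_power)
      finally have "real (card (J g) choose m) * real p ^ m \<le> real (p choose m) * (real n0 ^ 2) ^ m" .
      then show ?thesis using Pp by (simp add: power_divide field_simps)
    qed
    define r where "r = real n0 ^ 2 / real p"
    define C2 where "C2 = real ((p - m) choose (k - m))"
    have r0: "r \<ge> 0" unfolding r_def by simp
    have "(\<Sum>g\<in>G. real (card (J g) choose m) * C2) \<le> (\<Sum>g\<in>G. real (p choose m) * r ^ m * C2)"
      by (intro sum_mono mult_right_mono) (auto simp: bJ C2_def r_def)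
    also have "\<dots> = real (card G) * (real (p choose m) * r ^ m * C2)" by (rule sum_constant)
    finally have s1: "real (card Bad) \<le> real (card G) * (real (p choose m) * r ^ m * C2)"
      using b1 unfolding C2_def by linarith
    have s3: "real (p choose m) * C2 = real (p choose k) * real (k choose m)"
      unfolding C2_def using choose_mult[OF mk kp] by (metis of_nat_mult)
    have s4: "real (card G) = real p ^ (2 * n0)" unfolding cardG by (simp add: power_mult power2_eq_square)
    have s5: "real (k choose m) \<le> 2 ^ k" using binomial_le_pow2[of k m] by (metis of_nat_le_iff of_nat_numeral of_nat_power)
    have "real (card G) * (real (p choose m) * r ^ m * C2) = real p ^ (2 * n0) * r ^ m * real (p choose k) * real (k choose m)"
      using s3 s4 by (simp add: mult_ac)
    also have "\<dots> \<le> real p ^ (2 * n0) * r ^ m * real (p choose k) * 2 ^ k"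
      using s5 r0 by (intro mult_left_mono) auto
    also have "\<dots> = (real p ^ (2 * n0) * r ^ m * 2 ^ k) * real (p choose k)" by (simp add: mult_ac)
    finally have s6: "real (card Bad) \<le> (real p ^ (2 * n0) * r ^ m * 2 ^ k) * real (p choose k)"
      using s1 by linarith
    have "real p * (real p ^ (2 * n0) * r ^ m * 2 ^ k) \<le> 1" using key unfolding r_def by (simp add: mult_ac)
    then have "real p ^ (2 * n0) * r ^ m * 2 ^ k \<le> 1 / real p" using Pp by (simp add: pos_le_divide_eq mult.commute)
    then have "(real p ^ (2 * n0) * r ^ m * 2 ^ k) * real (p choose k) \<le> (1 / real p) * real (p choose k)"
      by (intro mult_right_mono) auto
    then have bB: "real (card Bad) \<le> real (p choose k) / real p" using s6 by simp
    have "real (card Good) = real (p choose k) - real (card Bad)" using cardGB cardA by simp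
    also have "\<dots> \<ge> (1 - 1 / real p) * real (p choose k)" using bB by (simp add: algebra_simps)
    finally have "real (card Good) \<ge> (1 - 1 / real p) * real (p choose k)" .
    then show "let k = nat \<lfloor>real p powr \<epsilon>\<rfloor> in
      real (card {S. S \<subseteq> Zp p \<and> card S = k \<and>
                   real (generic_complexity p \<alpha> S) > \<alpha> * real (card S) / ln (real p)})
      \<ge> (1 - 1 / real p) * real (p choose k)"
      unfolding Let_def k_def[symmetric] Good_def .
  qed
qed


end
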